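(* Let $m,n\in\mathbb{N}$, let $p_{\ell}\in\mathbb{N}$ for $1\le\ell\le m$, and let $s_{j,\ell}\in\mathbb{C}$ with $0<\Re(s_{j,\ell})<\frac12$ for $1\le j\le n$, $1\le\ell\le m$. Then the $n\times n$ matrix \[ \left(\prod_{\ell=1}^{m}\frac{(s_{j,\ell}+\overline{s_{k,\ell}})_{p_{\ell}}\,\zeta(p_{\ell}+s_{j,\ell}+\overline{s_{k,\ell}})}{\sin\pi(s_{j,\ell}+\overline{s_{k,\ell}})}\right)_{j,k=1}^{n} \] is positive semidefinite.
   Context: $(s)_p=s(s+1)\cdots(s+p-1)=\Gamma(s+p)/\Gamma(s)$, and $\zeta$ is the Riemann zeta function. A complex matrix $A=(a_{j,k})$ is positive semidefinite if $\sum_{j,k}a_{j,k}z_j\overline{z_k}\ge0$ for all complex $z_j$. *)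

theory Defs
  imports "HOL-Analysis.Analysis"
begin

text \<open>Riemann zeta function via its Dirichlet series; this is the Riemann zeta
  function on the half-plane Re s > 1, which is the only region where it is
  evaluated in the main statement (there Re of the argument exceeds p \<ge> 1).\<close>
definition riemann_zeta :: "complex \<Rightarrow> complex" where
  "riemann_zeta s = (\<Sum>k. 1 / (of_nat (Suc k)) powr s)"

definition psd_matrix :: "nat \<Rightarrow> (nat \<Rightarrow> nat \<Rightarrow> complex) \<Rightarrow> bool" where
  "psd_matrix n a \<longleftrightarrow>
     (\<forall>z :: nat \<Rightarrow> complex.
        let q = (\<Sum>j\<in>{1..n}. \<Sum>k\<in>{1..n}. a j k * z j * cnj (z k))
        in Im q = 0 \<and> Re q \<ge> 0)"

end

theory Submission
  imports Defs
begin

definition QF :: "nat \<Rightarrow> (nat \<Rightarrow> nat \<Rightarrow> complex) \<Rightarrow> (nat \<Rightarrow> complex) \<Rightarrow> complex" where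
  "QF n a z = (\<Sum>j\<in>{1..n}. \<Sum>k\<in>{1..n}. a j k * z j * cnj (z k))"

lemma psd_QF: "psd_matrix n a \<longleftrightarrow> (\<forall>z. Im (QF n a z) = 0 \<and> Re (QF n a z) \<ge> 0)"
  by (simp add: psd_matrix_def QF_def Let_def)

definition pres :: "nat \<Rightarrow> (nat \<Rightarrow> nat \<Rightarrow> complex) \<Rightarrow> bool" where
  "pres n F \<longleftrightarrow> (\<forall>A. psd_matrix n A \<longrightarrow> psd_matrix n (\<lambda>j k. A j k * F j k))"

lemma QF_rank1:
  "(\<Sum>j\<in>{1..n}. \<Sum>k\<in>{1..n}. A j k * z j * cnj (z k) * (c * (g j * cnj (g k))))
   = c * QF n A (\<lambda>j. z j * g j)"
  unfolding QF_def by (simp add: sum_distrib_left algebra_simps)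

lemma pres_integral:
  fixes w :: "real \<Rightarrow> real" and g :: "real \<Rightarrow> nat \<Rightarrow> complex"
  assumes B: "\<And>j k. j \<in> {1..n} \<Longrightarrow> k \<in> {1..n} \<Longrightarrow>
      ((\<lambda>x. of_real (w x) * (g x j * cnj (g x k))) has_integral B j k) S"
    and w: "\<And>x. x \<in> S \<Longrightarrow> w x \<ge> 0"
  shows "pres n B"
  unfolding pres_def psd_QF
proof (intro allI impI conjI)
  fix A z assume A: "\<forall>z. Im (QF n A z) = 0 \<and> 0 \<le> Re (QF n A z)"
  have "((\<lambda>x. \<Sum>j\<in>{1..n}. \<Sum>k\<in>{1..n}. A j k * z j * cnj (z k) * (of_real (w x) * (g x j * cnj (g x k))))
     has_integral (\<Sum>j\<in>{1..n}. \<Sum>k\<in>{1..n}. A j k * z j * cnj (z k) * B j k)) S"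
    by (intro has_integral_sum has_integral_mult_right B finite_atLeastAtMost) auto
  hence hi: "((\<lambda>x. of_real (w x) * QF n A (\<lambda>j. z j * g x j)) has_integral QF n (\<lambda>j k. A j k * B j k) z) S"
    unfolding QF_rank1 by (simp add: QF_def algebra_simps)
  have "((\<lambda>x. Re (of_real (w x) * QF n A (\<lambda>j. z j * g x j))) has_integral Re (QF n (\<lambda>j k. A j k * B j k) z)) S"
    using has_integral_linear[OF hi bounded_linear_Re] by (simp add: o_def)
  then show "0 \<le> Re (QF n (\<lambda>j k. A j k * B j k) z)"
    by (rule has_integral_nonneg) (use A w in auto)
  have "((\<lambda>x. Im (of_real (w x) * QF n A (\<lambda>j. z j * g x j))) has_integral Im (QF n (\<lambda>j k. A j k * B j k) z)) S"
    using has_integral_linear[OF hi bounded_linear_Im] by (simp add: o_def)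
  hence "((\<lambda>x. 0) has_integral Im (QF n (\<lambda>j k. A j k * B j k) z)) S"
    by (rule has_integral_eq[rotated]) (use A in auto)
  then show "Im (QF n (\<lambda>j k. A j k * B j k) z) = 0"
    using has_integral_unique has_integral_0 by blast
qed

lemma pres_sums:
  fixes w :: "nat \<Rightarrow> real" and g :: "nat \<Rightarrow> nat \<Rightarrow> complex"
  assumes B: "\<And>j k. j \<in> {1..n} \<Longrightarrow> k \<in> {1..n} \<Longrightarrow>
      (\<lambda>x. of_real (w x) * (g x j * cnj (g x k))) sums B j k"
    and w: "\<And>x. w x \<ge> 0"
  shows "pres n B"
  unfolding pres_def psd_QF
proof (intro allI impI conjI)
  fix A z assume A: "\<forall>z. Im (QF n A z) = 0 \<and> 0 \<le> Re (QF n A z)"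
  have "(\<lambda>x. \<Sum>j\<in>{1..n}. \<Sum>k\<in>{1..n}. A j k * z j * cnj (z k) * (of_real (w x) * (g x j * cnj (g x k))))
     sums (\<Sum>j\<in>{1..n}. \<Sum>k\<in>{1..n}. A j k * z j * cnj (z k) * B j k)"
    by (intro sums_sum sums_mult B) auto
  hence hi: "(\<lambda>x. of_real (w x) * QF n A (\<lambda>j. z j * g x j)) sums QF n (\<lambda>j k. A j k * B j k) z"
    unfolding QF_rank1 by (simp add: QF_def algebra_simps)
  hence re: "(\<lambda>x. Re (of_real (w x) * QF n A (\<lambda>j. z j * g x j))) sums Re (QF n (\<lambda>j k. A j k * B j k) z)"
   and im: "(\<lambda>x. Im (of_real (w x) * QF n A (\<lambda>j. z j * g x j))) sums Im (QF n (\<lambda>j k. A j k * B j k) z)"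
    by (auto simp: sums_complex_iff)
  from re show "0 \<le> Re (QF n (\<lambda>j k. A j k * B j k) z)"
    using sums_unique[OF re] suminf_nonneg[OF sums_summable[OF re]] A w by auto
  from im show "Im (QF n (\<lambda>j k. A j k * B j k) z) = 0"
    using A sums_unique sums_zero by fastforce
qed

lemma psd_cong: "(\<And>j k. j \<in> {1..n} \<Longrightarrow> k \<in> {1..n} \<Longrightarrow> A j k = A' j k) \<Longrightarrow> psd_matrix n A = psd_matrix n A'"
proof -
  assume h: "\<And>j k. j \<in> {1..n} \<Longrightarrow> k \<in> {1..n} \<Longrightarrow> A j k = A' j k"
  have "QF n A z = QF n A' z" for z unfolding QF_def by (intro sum.cong refl) (simp add: h)
  then show ?thesis unfolding psd_QF by simp
qed

lemma pres_cong: "(\<And>j k. j \<in> {1..n} \<Longrightarrow> k \<in> {1..n} \<Longrightarrow> F j k = F' j k) \<Longrightarrow> pres n F = pres n F'"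
  unfolding pres_def by (metis (no_types, lifting) psd_cong)

lemma pres_mult: "pres n F \<Longrightarrow> pres n G \<Longrightarrow> pres n (\<lambda>j k. F j k * G j k)"
  unfolding pres_def by (metis (no_types, lifting) ext mult.assoc)

lemma pres_prod: "finite L \<Longrightarrow> (\<And>l. l \<in> L \<Longrightarrow> pres n (F l)) \<Longrightarrow> pres n (\<lambda>j k. \<Prod>l\<in>L. F l j k)"
proof (induction L rule: finite_induct)
  case empty then show ?case by (simp add: pres_def)
next
  case (insert x L)
  then show ?case using pres_mult[of n "F x" "\<lambda>j k. \<Prod>l\<in>L. F l j k"] by simp
qed

lemma pres_const: "c \<ge> 0 \<Longrightarrow> pres n (\<lambda>j k. of_real c)"
proof -
  assume c: "c \<ge> 0"
  have eq: "(\<lambda>x. complex_of_real (if x = 0 then c else 0) * (1 * cnj 1)) =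
     (\<lambda>x. if x = 0 then complex_of_real c else 0)" by auto
  have "(\<lambda>x. complex_of_real (if x = 0 then c else 0) * (1 * cnj 1)) sums of_real c"
    unfolding eq using sums_single[where i=0 and f="\<lambda>_. complex_of_real c"] by simp
  then show ?thesis
    by (intro pres_sums[where w="\<lambda>i. if i = 0 then c else 0" and g="\<lambda>i j. 1"]) (use c in auto)
qed

lemma psd_one: "psd_matrix n (\<lambda>j k. 1)"
proof -
  have e: "QF n (\<lambda>j k. 1) z = (\<Sum>j\<in>{1..n}. z j) * cnj (\<Sum>j\<in>{1..n}. z j)" for z
    unfolding QF_def by (simp add: sum_distrib_left sum_distrib_right cnj_sum) (rule sum.swap)
  show ?thesis unfolding psd_QF e complex_mult_cnj by simp
qed

lemma cnj_real_powr: "t > 0 \<Longrightarrow> cnj (complex_of_real t powr z) = complex_of_real t powr cnj z"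
  by (subst cnj_powr) auto

lemma div_ofreal_aux: "(a::complex) / of_real e = of_real (1/e) * a"
  by (simp add: field_simps)

lemma pres_G1:
  assumes x: "\<And>j. j \<in> {1..n} \<Longrightarrow> 0 < Re (x j) \<and> Re (x j) < 1/2"
  shows "pres n (\<lambda>j k. Gamma (1 - (x j + cnj (x k))))"
proof (rule pres_integral[where S="{0<..}" and w="\<lambda>t. 1 / exp t" and g="\<lambda>t j. of_real t powr (- x j)"])
  fix j k assume j: "j \<in> {1..n}" and k: "k \<in> {1..n}"
  have "Re (1 - (x j + cnj (x k))) > 0" using x[OF j] x[OF k] by simp
  from Gamma_integral_complex'[OF this]
  show "((\<lambda>t. complex_of_real (1 / exp t) * (of_real t powr (- x j) * cnj (of_real t powr (- x k))))
        has_integral Gamma (1 - (x j + cnj (x k)))) {0<..}"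
  proof (rule has_integral_eq[rotated])
    fix t :: real assume "t \<in> {0<..}"
    hence t: "t > 0" by simp
    have "of_real t powr (1 - (x j + cnj (x k)) - 1) = of_real t powr (- x j) * of_real t powr (- cnj (x k))"
      by (simp add: powr_add[symmetric])
    then show "of_real t powr (1 - (x j + cnj (x k)) - 1) / of_real (exp t) =
       complex_of_real (1 / exp t) * (of_real t powr (- x j) * cnj (of_real t powr (- x k)))"
      using t by (simp add: cnj_real_powr field_simps)
  qed
qed auto

lemma pres_G2:
  assumes x: "\<And>j. j \<in> {1..n} \<Longrightarrow> 0 < Re (x j) \<and> Re (x j) < 1/2"
  shows "pres n (\<lambda>j k. Gamma (x j + cnj (x k) + of_nat p))"
proof (rule pres_integral[where S="{0<..}" and w="\<lambda>t. 1 / exp t"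
     and g="\<lambda>t j. of_real t powr (x j + (of_nat p - 1) / 2)"])
  fix j k assume j: "j \<in> {1..n}" and k: "k \<in> {1..n}"
  have "Re (x j + cnj (x k) + of_nat p) > 0" using x[OF j] x[OF k] by simp
  from Gamma_integral_complex'[OF this]
  show "((\<lambda>t. complex_of_real (1 / exp t) * (of_real t powr (x j + (of_nat p - 1) / 2) *
      cnj (of_real t powr (x k + (of_nat p - 1) / 2))))
        has_integral Gamma (x j + cnj (x k) + of_nat p)) {0<..}"
  proof (rule has_integral_eq[rotated])
    fix t :: real assume "t \<in> {0<..}"
    hence t: "t > 0" by simp
    have e: "x j + cnj (x k) + of_nat p - 1 = (x j + (of_nat p - 1) / 2) + (cnj (x k) + (of_nat p - 1) / 2)"
      by (simp add: field_simps)
    have pe: "of_real t powr (x j + cnj (x k) + of_nat p - 1) = of_real t powr (x j + (of_nat p - 1) / 2) *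
        of_real t powr (cnj (x k) + (of_nat p - 1) / 2)"
      unfolding e by (rule powr_add)
    have c: "cnj (of_real t powr (x k + (of_nat p - 1) / 2)) = of_real t powr (cnj (x k) + (of_nat p - 1) / 2)"
      using t by (simp add: cnj_real_powr)
    show "of_real t powr (x j + cnj (x k) + of_nat p - 1) / of_real (exp t) =
       complex_of_real (1 / exp t) * (of_real t powr (x j + (of_nat p - 1) / 2) *
      cnj (of_real t powr (x k + (of_nat p - 1) / 2)))"
      unfolding c pe by (rule div_ofreal_aux)
  qed
qed auto

lemma summable_zeta_terms:
  assumes "Re z > 1"
  shows "summable (\<lambda>i. 1 / (of_nat (Suc i) :: complex) powr z)"
proof (rule summable_norm_cancel)
  have "summable (\<lambda>i. real i powr (- Re z))"
    using assms by (subst summable_real_powr_iff) simp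
  hence "summable (\<lambda>i. real (Suc i) powr (- Re z))"
    by (subst summable_Suc_iff)
  moreover have "norm (1 / (of_nat (Suc i) :: complex) powr z) = real (Suc i) powr (- Re z)" for i
  proof -
    have "norm ((of_nat (Suc i) :: complex) powr z) = real (Suc i) powr Re z"
      by (subst norm_powr_real_powr) auto
    then show ?thesis by (simp add: norm_divide powr_minus_divide)
  qed
  ultimately show "summable (\<lambda>i. norm (1 / (of_nat (Suc i) :: complex) powr z))" by simp
qed

lemma pres_G3:
  assumes x: "\<And>j. j \<in> {1..n} \<Longrightarrow> 0 < Re (x j) \<and> Re (x j) < 1/2" and p: "p \<ge> 1"
  shows "pres n (\<lambda>j k. riemann_zeta (of_nat p + x j + cnj (x k)))"
proof (rule pres_sums[where w="\<lambda>i. 1"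
     and g="\<lambda>i j. (of_nat (Suc i) :: complex) powr (- (x j + of_nat p / 2))"])
  fix j k assume j: "j \<in> {1..n}" and k: "k \<in> {1..n}"
  have "Re (of_nat p + x j + cnj (x k)) > 1" using x[OF j] x[OF k] p by simp
  from summable_zeta_terms[OF this]
  have "(\<lambda>i. 1 / (of_nat (Suc i) :: complex) powr (of_nat p + x j + cnj (x k))) sums
      riemann_zeta (of_nat p + x j + cnj (x k))"
    unfolding riemann_zeta_def by (rule summable_sums)
  moreover have "1 / (of_nat (Suc i) :: complex) powr (of_nat p + x j + cnj (x k)) =
     complex_of_real 1 * ((of_nat (Suc i) :: complex) powr (- (x j + of_nat p / 2)) *
       cnj ((of_nat (Suc i) :: complex) powr (- (x k + of_nat p / 2))))" for i
  proof -
    have c: "cnj ((of_nat (Suc i) :: complex) powr (- (x k + of_nat p / 2))) =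
        (of_nat (Suc i) :: complex) powr (- (cnj (x k) + of_nat p / 2))"
      by (subst cnj_powr) auto
    have e: "- (of_nat p + x j + cnj (x k)) = (- (x j + of_nat p / 2)) + (- (cnj (x k) + of_nat p / 2))"
      by (simp add: field_simps)
    have "1 / (of_nat (Suc i) :: complex) powr (of_nat p + x j + cnj (x k)) =
       (of_nat (Suc i) :: complex) powr (- (of_nat p + x j + cnj (x k)))"
      by (rule powr_minus_divide[symmetric])
    also have "\<dots> = (of_nat (Suc i) :: complex) powr (- (x j + of_nat p / 2)) *
       (of_nat (Suc i) :: complex) powr (- (cnj (x k) + of_nat p / 2))"
      unfolding e by (rule powr_add)
    finally show ?thesis unfolding c by simp
  qed
  ultimately show "(\<lambda>i. complex_of_real 1 * ((of_nat (Suc i) :: complex) powr (- (x j + of_nat p / 2)) *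
       cnj ((of_nat (Suc i) :: complex) powr (- (x k + of_nat p / 2))))) sums
      riemann_zeta (of_nat p + x j + cnj (x k))" by simp
qed auto

lemma factor_identity:
  assumes "0 < Re a" "Re a < 1"
  shows "pochhammer a p * riemann_zeta (of_nat p + a) / sin (complex_of_real pi * a)
     = of_real (1/pi) * (Gamma (1 - a) * (Gamma (a + of_nat p) * riemann_zeta (of_nat p + a)))"
proof -
  have na: "a \<notin> \<int>\<^sub>\<le>\<^sub>0"
  proof
    assume "a \<in> \<int>\<^sub>\<le>\<^sub>0"
    then obtain k where "a = of_int k" "k \<le> 0" by (auto elim!: nonpos_Ints_cases)
    with assms show False by simp
  qed
  have G: "Gamma a \<noteq> 0" by (rule Gamma_nonzero[OF na])
  have poch: "pochhammer a p = Gamma (a + of_nat p) / Gamma a"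
    by (rule pochhammer_Gamma[OF na])
  have r: "1 / sin (complex_of_real pi * a) = Gamma a * Gamma (1 - a) / of_real pi"
    using Gamma_reflection_complex[of a] by (simp add: field_simps)
  have "pochhammer a p * riemann_zeta (of_nat p + a) / sin (complex_of_real pi * a)
     = pochhammer a p * riemann_zeta (of_nat p + a) * (1 / sin (complex_of_real pi * a))" by simp
  also have "\<dots> = Gamma (a + of_nat p) / Gamma a * riemann_zeta (of_nat p + a) * (Gamma a * Gamma (1 - a) / of_real pi)"
    unfolding r poch ..
  also have "\<dots> = of_real (1/pi) * (Gamma (1 - a) * (Gamma (a + of_nat p) * riemann_zeta (of_nat p + a)))"
    using G by (simp add: field_simps)
  finally show ?thesis .
qed

theorem mainTheorem10:
  fixes m n :: nat and p :: "nat \<Rightarrow> nat" and s :: "nat \<Rightarrow> nat \<Rightarrow> complex"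
  assumes p_pos: "\<And>l. l \<in> {1..m} \<Longrightarrow> p l \<ge> 1"
    and s_re: "\<And>j l. j \<in> {1..n} \<Longrightarrow> l \<in> {1..m} \<Longrightarrow> 0 < Re (s j l) \<and> Re (s j l) < 1/2"
  shows "psd_matrix n (\<lambda>j k. \<Prod>l\<in>{1..m}.
            pochhammer (s j l + cnj (s k l)) (p l)
            * riemann_zeta (of_nat (p l) + s j l + cnj (s k l))
            / sin (complex_of_real pi * (s j l + cnj (s k l))))"
proof -
  have "pres n (\<lambda>j k. \<Prod>l\<in>{1..m}.
            pochhammer (s j l + cnj (s k l)) (p l)
            * riemann_zeta (of_nat (p l) + s j l + cnj (s k l))
            / sin (complex_of_real pi * (s j l + cnj (s k l))))"
  proof (rule pres_prod)
    fix l assume l: "l \<in> {1..m}"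
    have x: "\<And>j. j \<in> {1..n} \<Longrightarrow> 0 < Re (s j l) \<and> Re (s j l) < 1/2"
      using s_re l by blast
    have P: "pres n (\<lambda>j k. of_real (1/pi) * (Gamma (1 - (s j l + cnj (s k l))) *
        (Gamma (s j l + cnj (s k l) + of_nat (p l)) * riemann_zeta (of_nat (p l) + s j l + cnj (s k l)))))"
      by (intro pres_mult pres_const pres_G1[OF x] pres_G2[OF x] pres_G3[OF x p_pos[OF l]]) simp
    show "pres n (\<lambda>j k. pochhammer (s j l + cnj (s k l)) (p l)
            * riemann_zeta (of_nat (p l) + s j l + cnj (s k l))
            / sin (complex_of_real pi * (s j l + cnj (s k l))))"
    proof (subst pres_cong)
      fix j k assume j: "j \<in> {1..n}" and k: "k \<in> {1..n}"
      have "0 < Re (s j l + cnj (s k l))" "Re (s j l + cnj (s k l)) < 1"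
        using x[OF j] x[OF k] by auto
      from factor_identity[OF this, of "p l"]
      show "pochhammer (s j l + cnj (s k l)) (p l)
            * riemann_zeta (of_nat (p l) + s j l + cnj (s k l))
            / sin (complex_of_real pi * (s j l + cnj (s k l))) =
          of_real (1/pi) * (Gamma (1 - (s j l + cnj (s k l))) *
        (Gamma (s j l + cnj (s k l) + of_nat (p l)) * riemann_zeta (of_nat (p l) + s j l + cnj (s k l))))"
        by (simp add: add.assoc)
    qed (rule P)
  qed simp
  then show ?thesis using psd_one[of n] unfolding pres_def by fastforce
qed

end
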